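(* Let $\rho = (\mathcal{V}, V, \mathbf{1}, \mathrm{var}, \mathrm{low}, \mathrm{high}, \mathrm{flip})$ be a COBDD with $\mathcal V=\{x_1,\dots,x_n\}$, let $v_1, \ldots, v_r \in V$ be nodes and $b_1, \ldots, b_r \in \mathbb{B}$ flipping bits. Then the node-translation part of GenerateCCode$(\rho, v_1, b_1, \ldots, v_r, b_r)$ (namely: $W:=\emptyset$, then for $i=1,\dots,r$, $W :=$ Translate$(\rho, v_i, W)$) generates a sequence of labeled C statements $B_1 \ldots B_k$ such that $k = |\bigcup_{i=1}^r V_{v_i}|$ and for all $v \in \bigcup_{i=1}^r V_{v_i}$: (1) the label L_$v$ occurs in $B_j$ for some $j$; and (2) for every $b\in\mathbb B$, if execution is started at label L_$v$ with x[$j-1$] $= x_j$ for all $j \in\{1,\dots,n\}$ and ret_b $= \bar b$, then a statement "return ret_b;" is executed within $O(p)$ steps, with ret_b $= [\![ v, b]\!]$ evaluated at $(x_1,\dots,x_n)$, where $p = \mathrm{height}(v)$.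
   Context: $\mathbb{B}=\{0,1\}$. A COBDD is a tuple $\rho = (\mathcal{V}, V, \mathbf{1}, \mathrm{var}, \mathrm{low}, \mathrm{high}, \mathrm{flip})$ with $\mathcal V$ a finite totally ordered set of boolean variables, $V$ a finite set of nodes, $\mathbf 1\in V$ the terminal node, $\mathrm{var}: V\setminus\{\mathbf 1\}\to\mathcal V$, $\mathrm{high},\mathrm{low}: V\setminus\{\mathbf 1\}\to V$, $\mathrm{flip}: V\setminus\{\mathbf 1\}\to\mathbb B$, with variables strictly increasing along edges $v\to\mathrm{high}(v)$ and $v\to\mathrm{low}(v)$; COBDDs are assumed reduced (no internal $v$ with $\mathrm{low}(v)=\mathrm{high}(v)$ and $\mathrm{flip}(v)=0$, no two distinct nodes with isomorphic reachable sub-COBDDs). $V_v$ is the set of nodes reachable from $v$ (including $v$); $\mathrm{height}(v)$ is the length of the longest path from $v$ to $\mathbf 1$. Semantics: $[\![ \mathbf 1, b]\!] := \bar b$ and, for internal $v$ with $\mathrm{var}(v)=x_i$, $[\![ v,b]\!] := x_i [\![ \mathrm{high}(v), b]\!] + \bar x_i [\![ \mathrm{low}(v), b\oplus \mathrm{flip}(v)]\!]$. The procedure Translate$(\rho,v,W)$: if $v\in W$, return $W$ (printing nothing); otherwise set $W := W\cup\{v\}$; print the label "L_$v$:"; if $v=\mathbf 1$, print "return ret_b;"; otherwise, with $i$ such that $\mathrm{var}(v)=x_i$, print "if (x[$i-1$] == 1) goto L_$\mathrm{high}(v)$;" followed by "else {ret_b = !ret_b; goto L_$\mathrm{low}(v)$;}"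 if $\mathrm{flip}(v)=1$ or "else goto L_$\mathrm{low}(v)$;" if $\mathrm{flip}(v)=0$, then set $W:=$ Translate$(\rho,\mathrm{high}(v),W)$ and then $W:=$ Translate$(\rho,\mathrm{low}(v),W)$; return $W$. Each node has a unique label L_$v$. Steps are counted as executed C statements. *)

theory Defs
  imports Main
begin

text \<open>Variables x_1,...,x_n are represented by their indices 1..n (ordered as nat).  The maps var, low, high, flip are only
  meaningful on internal nodes (nodes different from the terminal).\<close>

record 'n cobdd =
  nodes :: "'n set"
  one   :: 'n
  var   :: "'n \<Rightarrow> nat"
  low   :: "'n \<Rightarrow> 'n"
  high  :: "'n \<Rightarrow> 'n"
  flip  :: "'n \<Rightarrow> bool"

definition edges :: "'n cobdd \<Rightarrow> ('n \<times> 'n) set" where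
  "edges \<rho> = {(v, w). v \<in> nodes \<rho> \<and> v \<noteq> one \<rho> \<and> (w = high \<rho> v \<or> w = low \<rho> v)}"

definition reach :: "'n cobdd \<Rightarrow> 'n \<Rightarrow> 'n set" where
  "reach \<rho> v = {w. (v, w) \<in> (edges \<rho>)\<^sup>*}"

definition sub_iso :: "'n cobdd \<Rightarrow> 'n \<Rightarrow> 'n \<Rightarrow> bool" where
  "sub_iso \<rho> u w \<longleftrightarrow> (\<exists>f. bij_betw f (reach \<rho> u) (reach \<rho> w) \<and> f u = w \<and>
     (\<forall>z \<in> reach \<rho> u. (z = one \<rho> \<longleftrightarrow> f z = one \<rho>) \<and>
        (z \<noteq> one \<rho> \<longrightarrow> var \<rho> (f z) = var \<rho> z \<and> high \<rho> (f z) = f (high \<rho> z)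
            \<and> low \<rho> (f z) = f (low \<rho> z) \<and> flip \<rho> (f z) = flip \<rho> z)))"

definition is_cobdd :: "nat \<Rightarrow> 'n cobdd \<Rightarrow> bool" where
  "is_cobdd n \<rho> \<longleftrightarrow>
     finite (nodes \<rho>) \<and> one \<rho> \<in> nodes \<rho> \<and>
     (\<forall>v \<in> nodes \<rho> - {one \<rho>}.
        var \<rho> v \<in> {1..n} \<and> high \<rho> v \<in> nodes \<rho> \<and> low \<rho> v \<in> nodes \<rho> \<and>
        (high \<rho> v \<noteq> one \<rho> \<longrightarrow> var \<rho> v < var \<rho> (high \<rho> v)) \<and>
        (low \<rho> v \<noteq> one \<rho> \<longrightarrow> var \<rho> v < var \<rho> (low \<rho> v)))"

definition reduced :: "'n cobdd \<Rightarrow> bool" where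
  "reduced \<rho> \<longleftrightarrow>
     (\<forall>v \<in> nodes \<rho> - {one \<rho>}. \<not> (low \<rho> v = high \<rho> v \<and> \<not> flip \<rho> v)) \<and>
     (\<forall>u \<in> nodes \<rho>. \<forall>w \<in> nodes \<rho>. u \<noteq> w \<longrightarrow> \<not> sub_iso \<rho> u w)"

inductive path_len :: "'n cobdd \<Rightarrow> 'n \<Rightarrow> nat \<Rightarrow> bool" for \<rho> where
  "path_len \<rho> (one \<rho>) 0"
| "v \<noteq> one \<rho> \<Longrightarrow> path_len \<rho> (high \<rho> v) k \<Longrightarrow> path_len \<rho> v (Suc k)"
| "v \<noteq> one \<rho> \<Longrightarrow> path_len \<rho> (low \<rho> v) k \<Longrightarrow> path_len \<rho> v (Suc k)"

definition height :: "'n cobdd \<Rightarrow> 'n \<Rightarrow> nat" where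
  "height \<rho> v = Max {k. path_len \<rho> v k}"

text \<open>Semantics [[v, b]] evaluated at the assignment xs (xs j = value of x_j):
  sem \<rho> xs v b r means [[v,b]](xs) = r.\<close>
inductive sem :: "'n cobdd \<Rightarrow> (nat \<Rightarrow> bool) \<Rightarrow> 'n \<Rightarrow> bool \<Rightarrow> bool \<Rightarrow> bool"
  for \<rho> xs where
  "sem \<rho> xs (one \<rho>) b (\<not> b)"
| "v \<noteq> one \<rho> \<Longrightarrow> xs (var \<rho> v) \<Longrightarrow> sem \<rho> xs (high \<rho> v) b r \<Longrightarrow> sem \<rho> xs v b r"
| "v \<noteq> one \<rho> \<Longrightarrow> \<not> xs (var \<rho> v) \<Longrightarrow> sem \<rho> xs (low \<rho> v) (b \<noteq> flip \<rho> v) r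
     \<Longrightarrow> sem \<rho> xs v b r"

text \<open>The C statement printed after label L_v:
  CReturn: "return ret_b;"
  CIf i h f l: "if (x[i] == 1) goto L_h; else goto L_l;" (f = False) or
               "if (x[i] == 1) goto L_h; else {ret_b = !ret_b; goto L_l;}" (f = True).
  A labeled block is a pair (v, statement), standing for "L_v: statement".\<close>
datatype 'n cstmt = CReturn | CIf nat 'n bool 'n

type_synonym 'n block = "'n \<times> 'n cstmt"

text \<open>Translate(\<rho>, v, W): translate \<rho> v W out W' means the call prints the
  block sequence out and returns W'.\<close>
inductive translate :: "'n cobdd \<Rightarrow> 'n \<Rightarrow> 'n set \<Rightarrow> 'n block list \<Rightarrow> 'n set \<Rightarrow> bool"
  for \<rho> where
  visited: "v \<in> W \<Longrightarrow> translate \<rho> v W [] W"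
| terminal: "v \<notin> W \<Longrightarrow> v = one \<rho> \<Longrightarrow> translate \<rho> v W [(v, CReturn)] (insert v W)"
| internal: "v \<notin> W \<Longrightarrow> v \<noteq> one \<rho> \<Longrightarrow>
     translate \<rho> (high \<rho> v) (insert v W) out1 W1 \<Longrightarrow>
     translate \<rho> (low \<rho> v) W1 out2 W2 \<Longrightarrow>
     translate \<rho> v W ((v, CIf (var \<rho> v - 1) (high \<rho> v) (flip \<rho> v) (low \<rho> v)) # out1 @ out2) W2"

inductive translate_all :: "'n cobdd \<Rightarrow> 'n list \<Rightarrow> 'n set \<Rightarrow> 'n block list \<Rightarrow> 'n set \<Rightarrow> bool"
  for \<rho> where
  "translate_all \<rho> [] W [] W"
| "translate \<rho> v W out1 W1 \<Longrightarrow> translate_all \<rho> vs W1 out2 W2 \<Longrightarrow>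
     translate_all \<rho> (v # vs) W (out1 @ out2) W2"

text \<open>Execution of the generated code, started at label L_v with the C array
  arr (arr i = x[i]) and ret_b = r.  exec prog arr v r k r' means: a statement
  "return ret_b;" is executed after exactly k executed C statements, with
  ret_b = r' at that moment.  Statement counting: "return" = 1;
  if-statement = 1, each goto = 1, the assignment ret_b = !ret_b = 1.
  Jumps go to the block carrying the label (map_of finds it).\<close>
inductive exec :: "'n block list \<Rightarrow> (nat \<Rightarrow> bool) \<Rightarrow> 'n \<Rightarrow> bool \<Rightarrow> nat \<Rightarrow> bool \<Rightarrow> bool"
  for prog arr where
  "map_of prog v = Some CReturn \<Longrightarrow> exec prog arr v r 1 r"
| "map_of prog v = Some (CIf i h f l) \<Longrightarrow> arr i \<Longrightarrow> exec prog arr h r k r'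
     \<Longrightarrow> exec prog arr v r (k + 2) r'"
| "map_of prog v = Some (CIf i h f l) \<Longrightarrow> \<not> arr i \<Longrightarrow> exec prog arr l (r \<noteq> f) k r'
     \<Longrightarrow> exec prog arr v r (k + (if f then 3 else 2)) r'"

end

theory Submission
  imports Defs
begin

definition stmt :: "'n cobdd \<Rightarrow> 'n \<Rightarrow> 'n cstmt" where
  "stmt \<rho> u = (if u = one \<rho> then CReturn else CIf (var \<rho> u - 1) (high \<rho> u) (flip \<rho> u) (low \<rho> u))"

definition rk :: "nat \<Rightarrow> 'n cobdd \<Rightarrow> 'n \<Rightarrow> nat" where
  "rk n \<rho> v = (if v = one \<rho> then 0 else Suc n - var \<rho> v)"

lemma rk_high:
  assumes "is_cobdd n \<rho>" "v \<in> nodes \<rho>" "v \<noteq> one \<rho>"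
  shows "rk n \<rho> (high \<rho> v) < rk n \<rho> v" "rk n \<rho> (low \<rho> v) < rk n \<rho> v"
    "high \<rho> v \<in> nodes \<rho>" "low \<rho> v \<in> nodes \<rho>"
proof -
  have v: "var \<rho> v \<in> {1..n}" "high \<rho> v \<in> nodes \<rho>" "low \<rho> v \<in> nodes \<rho>"
    "high \<rho> v \<noteq> one \<rho> \<longrightarrow> var \<rho> v < var \<rho> (high \<rho> v)"
    "low \<rho> v \<noteq> one \<rho> \<longrightarrow> var \<rho> v < var \<rho> (low \<rho> v)"
    using assms unfolding is_cobdd_def by auto
  have h: "high \<rho> v \<noteq> one \<rho> \<longrightarrow> var \<rho> (high \<rho> v) \<in> {1..n}"
    "low \<rho> v \<noteq> one \<rho> \<longrightarrow> var \<rho> (low \<rho> v) \<in> {1..n}"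
    using assms v unfolding is_cobdd_def by auto
  show "rk n \<rho> (high \<rho> v) < rk n \<rho> v" "rk n \<rho> (low \<rho> v) < rk n \<rho> v"
    using v h assms(3) unfolding rk_def by auto
  show "high \<rho> v \<in> nodes \<rho>" "low \<rho> v \<in> nodes \<rho>" using v by auto
qed

lemma translate_inv:
  assumes "translate \<rho> v W out W'" "is_cobdd n \<rho>" "v \<in> nodes \<rho>"
  shows "W \<subseteq> W' \<and> v \<in> W' \<and> set (map fst out) = W' - W \<and> distinct (map fst out) \<and>
    (\<forall>u \<in> W' - W. u \<noteq> one \<rho> \<longrightarrow> high \<rho> u \<in> W' \<and> low \<rho> u \<in> W') \<and>
    (\<forall>p \<in> set out. snd p = stmt \<rho> (fst p)) \<and> W' - W \<subseteq> reach \<rho> v"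
  using assms
proof (induction rule: translate.induct)
  case (visited v W)
  then show ?case by auto
next
  case (terminal v W)
  then show ?case by (auto simp: stmt_def reach_def)
next
  case (internal v W out1 W1 out2 W2)
  have hn: "high \<rho> v \<in> nodes \<rho>" "low \<rho> v \<in> nodes \<rho>" using rk_high(3,4)[OF internal.prems(1) internal.prems(2) internal.hyps(2)] by blast+
  note I1 = internal.IH(1)[OF internal.prems(1) hn(1)]
  note I2 = internal.IH(2)[OF internal.prems(1) hn(2)]
  have e1: "(v, high \<rho> v) \<in> edges \<rho>" "(v, low \<rho> v) \<in> edges \<rho>"
    using internal by (auto simp: edges_def)
  have r1: "reach \<rho> (high \<rho> v) \<subseteq> reach \<rho> v" "reach \<rho> (low \<rho> v) \<subseteq> reach \<rho> v"
    using e1 by (auto simp: reach_def intro: converse_rtrancl_into_rtrancl)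
  have vr: "v \<in> reach \<rho> v" by (simp add: reach_def)
  from I1 have a1: "insert v W \<subseteq> W1" "high \<rho> v \<in> W1" "set (map fst out1) = W1 - insert v W"
    "distinct (map fst out1)"
    "\<forall>u \<in> W1 - insert v W. u \<noteq> one \<rho> \<longrightarrow> high \<rho> u \<in> W1 \<and> low \<rho> u \<in> W1"
    "\<forall>p \<in> set out1. snd p = stmt \<rho> (fst p)" "W1 - insert v W \<subseteq> reach \<rho> (high \<rho> v)"
    by blast+
  from I2 have a2: "W1 \<subseteq> W2" "low \<rho> v \<in> W2" "set (map fst out2) = W2 - W1"
    "distinct (map fst out2)"
    "\<forall>u \<in> W2 - W1. u \<noteq> one \<rho> \<longrightarrow> high \<rho> u \<in> W2 \<and> low \<rho> u \<in> W2"
    "\<forall>p \<in> set out2. snd p = stmt \<rho> (fst p)" "W2 - W1 \<subseteq> reach \<rho> (low \<rho> v)"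
    by blast+
  have g1: "W \<subseteq> W2" using a1(1) a2(1) by blast
  have g2: "v \<in> W2" using a1(1) a2(1) by blast
  have g3: "set (map fst ((v, CIf (var \<rho> v - 1) (high \<rho> v) (flip \<rho> v) (low \<rho> v)) # out1 @ out2)) = W2 - W"
    using a1(1,3) a2(1,3) internal.hyps(1) by auto
  have g4: "distinct (map fst ((v, CIf (var \<rho> v - 1) (high \<rho> v) (flip \<rho> v) (low \<rho> v)) # out1 @ out2))"
    using a1(1,3,4) a2(3,4) by auto
  have g5: "\<forall>u \<in> W2 - W. u \<noteq> one \<rho> \<longrightarrow> high \<rho> u \<in> W2 \<and> low \<rho> u \<in> W2"
  proof (intro ballI impI)
    fix u assume u: "u \<in> W2 - W" "u \<noteq> one \<rho>"
    consider "u = v" | "u \<in> W1 - insert v W" | "u \<in> W2 - W1" using u by blast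
    then show "high \<rho> u \<in> W2 \<and> low \<rho> u \<in> W2"
    proof cases
      case 1 then show ?thesis using a1(2) a2(1,2) by blast
    next
      case 2 then show ?thesis using a1(5) a2(1) u(2) by blast
    next
      case 3 then show ?thesis using a2(5) u(2) by blast
    qed
  qed
  have g6: "\<forall>p \<in> set ((v, CIf (var \<rho> v - 1) (high \<rho> v) (flip \<rho> v) (low \<rho> v)) # out1 @ out2). snd p = stmt \<rho> (fst p)"
    using a1(6) a2(6) internal.hyps(2) by (auto simp: stmt_def)
  have g7: "W2 - W \<subseteq> reach \<rho> v" using a1(7) a2(7) r1 vr by blast
  show ?case using g1 g2 g3 g4 g5 g6 g7 by blast
qed

lemma translate_all_inv:
  assumes "translate_all \<rho> vs W out W'" "is_cobdd n \<rho>" "set vs \<subseteq> nodes \<rho>"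
  shows "W \<subseteq> W' \<and> set vs \<subseteq> W' \<and> set (map fst out) = W' - W \<and> distinct (map fst out) \<and>
    (\<forall>u \<in> W' - W. u \<noteq> one \<rho> \<longrightarrow> high \<rho> u \<in> W' \<and> low \<rho> u \<in> W') \<and>
    (\<forall>p \<in> set out. snd p = stmt \<rho> (fst p)) \<and> W' - W \<subseteq> (\<Union>u \<in> set vs. reach \<rho> u)"
  using assms
proof (induction rule: translate_all.induct)
  case (1 W)
  then show ?case by auto
next
  case (2 v W out1 W1 vs out2 W2)
  note T = translate_inv[OF 2(1) 2(4)] 
  have "v \<in> nodes \<rho>" using 2 by auto
  note T = T[OF this]
  note I = 2(3)[OF 2(4)] 
  have "set vs \<subseteq> nodes \<rho>" using 2 by auto
  note I = I[OF this]
  from T have a1: "W \<subseteq> W1" "v \<in> W1" "set (map fst out1) = W1 - W"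
    "distinct (map fst out1)"
    "\<forall>u \<in> W1 - W. u \<noteq> one \<rho> \<longrightarrow> high \<rho> u \<in> W1 \<and> low \<rho> u \<in> W1"
    "\<forall>p \<in> set out1. snd p = stmt \<rho> (fst p)" "W1 - W \<subseteq> reach \<rho> v"
    by blast+
  from I have a2: "W1 \<subseteq> W2" "set vs \<subseteq> W2" "set (map fst out2) = W2 - W1"
    "distinct (map fst out2)"
    "\<forall>u \<in> W2 - W1. u \<noteq> one \<rho> \<longrightarrow> high \<rho> u \<in> W2 \<and> low \<rho> u \<in> W2"
    "\<forall>p \<in> set out2. snd p = stmt \<rho> (fst p)" "W2 - W1 \<subseteq> (\<Union>u \<in> set vs. reach \<rho> u)"
    by blast+
  have g1: "W \<subseteq> W2" "set (v # vs) \<subseteq> W2" using a1(1,2) a2(1,2) by auto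
  have g3: "set (map fst (out1 @ out2)) = W2 - W" using a1(1,3) a2(1,3) by auto
  have g4: "distinct (map fst (out1 @ out2))" using a1(3,4) a2(3,4) by auto
  have g5: "\<forall>u \<in> W2 - W. u \<noteq> one \<rho> \<longrightarrow> high \<rho> u \<in> W2 \<and> low \<rho> u \<in> W2"
    using a1(5) a2(1,5) by blast
  have g6: "\<forall>p \<in> set (out1 @ out2). snd p = stmt \<rho> (fst p)" using a1(6) a2(6) by auto
  have g7: "W2 - W \<subseteq> (\<Union>u \<in> set (v # vs). reach \<rho> u)" using a1(7) a2(7) by auto
  show ?case using g1 g3 g4 g5 g6 g7 by blast
qed

lemma translate_ex:
  assumes "is_cobdd n \<rho>" "v \<in> nodes \<rho>"
  shows "\<exists>out W'. translate \<rho> v W out W'"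
  using assms(2)
proof (induction v arbitrary: W rule: measure_induct_rule[where f="rk n \<rho>"])
  case (less v)
  show ?case
  proof (cases "v \<in> W")
    case True then show ?thesis using translate.visited[of v W \<rho>] by blast
  next
    case nW: False
    show ?thesis
    proof (cases "v = one \<rho>")
      case True then show ?thesis using translate.terminal[OF nW True] by blast
    next
      case False
      note R = rk_high[OF assms(1) less.prems False]
      obtain o1 W1 where 1: "translate \<rho> (high \<rho> v) (insert v W) o1 W1"
        using less.IH[OF R(1) R(3)] by blast
      obtain o2 W2 where 2: "translate \<rho> (low \<rho> v) W1 o2 W2"
        using less.IH[OF R(2) R(4)] by blast
      show ?thesis using translate.internal[OF nW False 1 2] by blast
    qed
  qed
qed

lemma translate_all_ex:
  assumes "is_cobdd n \<rho>" "set vs \<subseteq> nodes \<rho>"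
  shows "\<exists>out W'. translate_all \<rho> vs W out W'"
  using assms(2)
proof (induction vs arbitrary: W)
  case Nil then show ?case using translate_all.intros(1) by blast
next
  case (Cons v vs)
  obtain o1 W1 where 1: "translate \<rho> v W o1 W1" using translate_ex[OF assms(1)] Cons by force
  obtain o2 W2 where 2: "translate_all \<rho> vs W1 o2 W2" using Cons by force
  show ?case using translate_all.intros(2)[OF 1 2] by blast
qed

lemma path_len_bound:
  assumes "path_len \<rho> v k" "is_cobdd n \<rho>" "v \<in> nodes \<rho>"
  shows "k \<le> rk n \<rho> v"
  using assms
proof (induction rule: path_len.induct)
  case 1 then show ?case by simp
next
  case (2 v k)
  note R = rk_high[OF 2(4) 2(5) 2(1)]
  have "k \<le> rk n \<rho> (high \<rho> v)" using 2(3)[OF 2(4) R(3)] .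
  then show ?case using R(1) by simp
next
  case (3 v k)
  note R = rk_high[OF 3(4) 3(5) 3(1)]
  have "k \<le> rk n \<rho> (low \<rho> v)" using 3(3)[OF 3(4) R(4)] .
  then show ?case using R(2) by simp
qed

lemma height_ge:
  assumes "path_len \<rho> v k" "is_cobdd n \<rho>" "v \<in> nodes \<rho>"
  shows "k \<le> height \<rho> v"
proof -
  have "{k. path_len \<rho> v k} \<subseteq> {..rk n \<rho> v}" by (auto intro: path_len_bound[OF _ assms(2,3)])
  then have "finite {k. path_len \<rho> v k}" using finite_subset by blast
  then show ?thesis unfolding height_def using assms(1) by (simp add: Max_ge)
qed

lemma exec_ex:
  assumes cob: "is_cobdd n \<rho>" and Wn: "W \<subseteq> nodes \<rho>"
    and cl: "\<forall>u \<in> W. u \<noteq> one \<rho> \<longrightarrow> high \<rho> u \<in> W \<and> low \<rho> u \<in> W"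
    and mp: "\<forall>u \<in> W. map_of prog u = Some (stmt \<rho> u)"
    and arr: "\<forall>j \<in> {1..n}. arr (j - 1) = xs j"
    and vW: "v \<in> W"
  shows "\<exists>k r' len. exec prog arr v r k r' \<and> path_len \<rho> v len \<and> k \<le> 3 * len + 1
            \<and> sem \<rho> xs v (\<not> r) r'"
  using vW
proof (induction v arbitrary: r rule: measure_induct_rule[where f="rk n \<rho>"])
  case (less v)
  show ?case
  proof (cases "v = one \<rho>")
    case True
    have "map_of prog v = Some CReturn" using mp less.prems True by (simp add: stmt_def)
    then have "exec prog arr v r 1 r" by (rule exec.intros(1))
    moreover have "sem \<rho> xs v (\<not> r) r" using True sem.intros(1)[of \<rho> xs "\<not> r"] by simp
    moreover have "path_len \<rho> v 0" using True path_len.intros(1) by simp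
    ultimately show ?thesis by (intro exI[of _ 1] exI[of _ r] exI[of _ 0]) simp
  next
    case False
    have vn: "v \<in> nodes \<rho>" using Wn less.prems by auto
    note R = rk_high[OF cob vn False]
    have M: "map_of prog v = Some (CIf (var \<rho> v - 1) (high \<rho> v) (flip \<rho> v) (low \<rho> v))"
      using mp less.prems False by (simp add: stmt_def)
    have "var \<rho> v \<in> {1..n}" using cob vn False unfolding is_cobdd_def by auto
    then have ax: "arr (var \<rho> v - 1) = xs (var \<rho> v)" using arr by auto
    have hW: "high \<rho> v \<in> W" "low \<rho> v \<in> W" using cl less.prems False by auto
    show ?thesis
    proof (cases "xs (var \<rho> v)")
      case True
      obtain k r' len where H: "exec prog arr (high \<rho> v) r k r'" "path_len \<rho> (high \<rho> v) len"
        "k \<le> 3 * len + 1" "sem \<rho> xs (high \<rho> v) (\<not> r) r'"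
        using less.IH[OF R(1) hW(1)] by blast
      have "exec prog arr v r (k + 2) r'" using exec.intros(2)[OF M _ H(1)] ax True by simp
      moreover have "path_len \<rho> v (Suc len)" using path_len.intros(2)[OF False H(2)] .
      moreover have "sem \<rho> xs v (\<not> r) r'" using sem.intros(2)[OF False True H(4)] .
      ultimately show ?thesis using H(3) by (intro exI[of _ "k+2"] exI[of _ r'] exI[of _ "Suc len"]) auto
    next
      case nx: False
      obtain k r' len where H: "exec prog arr (low \<rho> v) (r \<noteq> flip \<rho> v) k r'" "path_len \<rho> (low \<rho> v) len"
        "k \<le> 3 * len + 1" "sem \<rho> xs (low \<rho> v) (\<not> (r \<noteq> flip \<rho> v)) r'"
        using less.IH[OF R(2) hW(2)] by blast
      have "exec prog arr v r (k + (if flip \<rho> v then 3 else 2)) r'"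
        using exec.intros(3)[OF M _ H(1)] ax nx by simp
      moreover have "path_len \<rho> v (Suc len)" using path_len.intros(3)[OF False H(2)] .
      moreover have "sem \<rho> xs (low \<rho> v) ((\<not> r) \<noteq> flip \<rho> v) r'" using H(4) by simp
      then have "sem \<rho> xs v (\<not> r) r'" using False nx by (blast intro: sem.intros(3))
      ultimately show ?thesis using H(3)
        by (intro exI[of _ "k + (if flip \<rho> v then 3 else 2)"] exI[of _ r'] exI[of _ "Suc len"]) auto
    qed
  qed
qed

theorem lemma4:
  shows "\<exists>c::nat. \<forall>(n::nat) (\<rho>::'n cobdd) (vs::'n list) (bs::bool list).
     is_cobdd n \<rho> \<and> reduced \<rho> \<and> set vs \<subseteq> nodes \<rho> \<and> length bs = length vs \<longrightarrow>
     (\<exists>prog W'. translate_all \<rho> vs {} prog W') \<and>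
     (\<forall>prog W'. translate_all \<rho> vs {} prog W' \<longrightarrow>
        length prog = card (\<Union>v \<in> set vs. reach \<rho> v) \<and>
        (\<forall>v \<in> (\<Union>u \<in> set vs. reach \<rho> u).
           (\<exists>j < length prog. fst (prog ! j) = v) \<and>
           (\<forall>b (xs::nat \<Rightarrow> bool) (arr::nat \<Rightarrow> bool).
              (\<forall>j \<in> {1..n}. arr (j - 1) = xs j) \<longrightarrow>
              (\<exists>k r'. exec prog arr v (\<not> b) k r' \<and> k \<le> c * (height \<rho> v + 1)
                      \<and> sem \<rho> xs v b r'))))"
proof (intro exI[of _ 4] allI impI conjI)
  fix n and \<rho> :: "'n cobdd" and vs :: "'n list" and bs :: "bool list"
  assume A: "is_cobdd n \<rho> \<and> reduced \<rho> \<and> set vs \<subseteq> nodes \<rho> \<and> length bs = length vs"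
  then have cob: "is_cobdd n \<rho>" and vsn: "set vs \<subseteq> nodes \<rho>" by auto
  show "\<exists>prog W'. translate_all \<rho> vs {} prog W'" using translate_all_ex[OF cob vsn] .
  fix prog W' assume T: "translate_all \<rho> vs {} prog W'"
  note I = translate_all_inv[OF T cob vsn]
  have W1: "W' \<subseteq> (\<Union>u \<in> set vs. reach \<rho> u)" using I by auto
  have W2: "(\<Union>u \<in> set vs. reach \<rho> u) \<subseteq> W'"
  proof
    fix w assume "w \<in> (\<Union>u \<in> set vs. reach \<rho> u)"
    then obtain u where u: "u \<in> set vs" "(u, w) \<in> (edges \<rho>)\<^sup>*" by (auto simp: reach_def)
    from u(2) show "w \<in> W'"
    proof (induction rule: rtrancl_induct)
      case base then show ?case using u(1) I by auto
    next
      case (step y z) then show ?case using I by (auto simp: edges_def)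
    qed
  qed
  have WE: "W' = (\<Union>u \<in> set vs. reach \<rho> u)" using W1 W2 by blast
  have S: "set (map fst prog) = W'" using I by auto
  show "length prog = card (\<Union>v \<in> set vs. reach \<rho> v)"
    using distinct_card[of "map fst prog"] I S WE by simp
  have Wn: "W' \<subseteq> nodes \<rho>"
  proof
    fix w assume "w \<in> W'"
    then obtain u where u: "u \<in> set vs" "(u, w) \<in> (edges \<rho>)\<^sup>*" using WE by (auto simp: reach_def)
    from u(2) show "w \<in> nodes \<rho>"
    proof (induction rule: rtrancl_induct)
      case base then show ?case using u(1) vsn by auto
    next
      case (step y z) then show ?case using cob by (auto simp: edges_def is_cobdd_def)
    qed
  qed
  have mp: "\<forall>u \<in> W'. map_of prog u = Some (stmt \<rho> u)"
  proof
    fix u assume "u \<in> W'"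
    then obtain s where us: "(u, s) \<in> set prog" using S by auto
    then have "s = stmt \<rho> u" using I by fastforce
    then show "map_of prog u = Some (stmt \<rho> u)" using map_of_is_SomeI[OF _ us] I by simp
  qed
  have cl: "\<forall>u \<in> W'. u \<noteq> one \<rho> \<longrightarrow> high \<rho> u \<in> W' \<and> low \<rho> u \<in> W'" using I by auto
  show "\<forall>v \<in> (\<Union>u \<in> set vs. reach \<rho> u).
           (\<exists>j < length prog. fst (prog ! j) = v) \<and>
           (\<forall>b (xs::nat \<Rightarrow> bool) (arr::nat \<Rightarrow> bool).
              (\<forall>j \<in> {1..n}. arr (j - 1) = xs j) \<longrightarrow>
              (\<exists>k r'. exec prog arr v (\<not> b) k r' \<and> k \<le> 4 * (height \<rho> v + 1)
                      \<and> sem \<rho> xs v b r'))"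
  proof (intro ballI conjI allI impI)
    fix v assume v: "v \<in> (\<Union>u \<in> set vs. reach \<rho> u)"
    then have vW: "v \<in> W'" using WE by simp
    then have "v \<in> set (map fst prog)" using S by simp
    then show "\<exists>j < length prog. fst (prog ! j) = v" by (metis in_set_conv_nth length_map nth_map)
    fix b xs arr assume arr: "\<forall>j \<in> {1..n}. arr (j - 1) = (xs::nat \<Rightarrow> bool) j"
    obtain k r' len where E: "exec prog arr v (\<not> b) k r'" "path_len \<rho> v len" "k \<le> 3 * len + 1"
      "sem \<rho> xs v (\<not> \<not> b) r'"
      using exec_ex[OF cob Wn cl mp arr vW] by blast
    have "len \<le> height \<rho> v" using height_ge[OF E(2) cob] Wn vW by auto
    then have K: "k \<le> 4 * (height \<rho> v + 1)" using E(3) by simp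
    have S: "sem \<rho> xs v b r'" using E(4) by simp
    show "\<exists>k r'. exec prog arr v (\<not> b) k r' \<and> k \<le> 4 * (height \<rho> v + 1) \<and> sem \<rho> xs v b r'"
      using E(1) K S by blast
  qed
qed

end
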